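(* Let $w:[0,1]\to\mathbb{R}^+$ be a non-increasing differentiable function (extended to $\mathbb{R}$ by $w(y)=w(0)$ for $y\le0$, $w(y)=w(1)$ for $y\ge1$), and let $R$ be a $k\times k$ doubly stochastic matrix. If $$k>-\frac{w'(1/k)}{w(1/k)},$$ then $\frac1k\mathbf 1$ is a stable equilibrium of the ODE $\dot y=h(y)$, where $h(y)=\frac{\mathbf{w}(y)}{S_w(y)}R-y$.
   Context: $\mathbf 1=(1,\dots,1)\in\mathbb{R}^k$ (row vector). For $y\in\mathbb{R}^k$, $\mathbf{w}(y)=(w(y_1),\dots,w(y_k))$ and $S_w(y)=\sum_i w(y_i)$. $R$ doubly stochastic means nonnegative entries with all row and column sums $1$. An equilibrium $x^*$ of $\dot y=h(y)$ (i.e. $h(x^* )=0$) is called stable if all eigenvalues of the Jacobian matrix of $h$ at $x^*$ have negative real part. *)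

theory Defs
  imports "HOL-Analysis.Analysis"
begin

text \<open>Extension of w from [0,1] to the real line: w(y) = w(0) for y \<le> 0, w(y) = w(1) for y \<ge> 1.\<close>
definition wext :: "(real \<Rightarrow> real) \<Rightarrow> real \<Rightarrow> real" where
  "wext w y = w (max 0 (min 1 y))"

text \<open>The vector field h(y) = w(y) R / S_w(y) - y, with w(y) a row vector multiplied on the left of R.\<close>
definition hfield :: "(real \<Rightarrow> real) \<Rightarrow> real^'k^'k \<Rightarrow> real^'k \<Rightarrow> real^'k" where
  "hfield w R y =
     (let wv = (\<chi> i. wext w (y $ i)); S = (\<Sum>i\<in>UNIV. wext w (y $ i))
      in (1 / S) *\<^sub>R (wv v* R) - y)"

definition doubly_stochastic :: "real^'k^'k \<Rightarrow> bool" where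
  "doubly_stochastic R \<longleftrightarrow>
     (\<forall>i j. 0 \<le> R $ i $ j) \<and>
     (\<forall>i. (\<Sum>j\<in>UNIV. R $ i $ j) = 1) \<and>
     (\<forall>j. (\<Sum>i\<in>UNIV. R $ i $ j) = 1)"

definition is_eigenvalue :: "complex^'n^'n \<Rightarrow> complex \<Rightarrow> bool" where
  "is_eigenvalue A c \<longleftrightarrow> (\<exists>v. v \<noteq> 0 \<and> A *v v = c *s v)"

text \<open>Jacobian matrix of h at x (as a real matrix), and its complexification.\<close>
definition jacobian :: "(real^'n \<Rightarrow> real^'n) \<Rightarrow> real^'n \<Rightarrow> real^'n^'n" where
  "jacobian h x = matrix (frechet_derivative h (at x))"

definition stable_equilibrium :: "(real^'n \<Rightarrow> real^'n) \<Rightarrow> real^'n \<Rightarrow> bool" where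
  "stable_equilibrium h x \<longleftrightarrow>
     h x = 0 \<and> h differentiable (at x) \<and>
     (\<forall>c. is_eigenvalue (\<chi> i j. complex_of_real (jacobian h x $ i $ j)) c \<longrightarrow> Re c < 0)"

end

theory Submission
  imports Defs
begin

lemma vec_deriv_comp:
  fixes f :: "real^'m \<Rightarrow> real^'n"
  assumes "\<And>j. ((\<lambda>y. f y $ j) has_derivative (\<lambda>v. f' v $ j)) (at x)"
  shows "(f has_derivative f') (at x)"
proof -
  have "(f has_derivative f') (at x within UNIV)"
  proof (subst has_derivative_componentwise_within, intro ballI)
    fix b :: "real^'n" assume "b \<in> Basis"
    then obtain j where b: "b = axis j 1" by (auto simp: Basis_vec_def)
    show "((\<lambda>y. f y \<bullet> b) has_derivative (\<lambda>v. f' v \<bullet> b)) (at x within UNIV)"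
      using assms[of j] by (simp add: b inner_axis)
  qed
  then show ?thesis by simp
qed

lemma eig_lemma:
  fixes R :: "real^'k^'k" and a :: real
  assumes ds: "doubly_stochastic R" and a: "\<bar>a\<bar> < 1"
    and ev: "is_eigenvalue (\<chi> i j. complex_of_real (a * (R$j$i - 1 / real CARD('k)) - (if i = j then 1 else 0))) l"
  shows "Re l < 0"
proof -
  define n where "n = real CARD('k)"
  have n0: "n > 0" unfolding n_def by simp
  obtain v :: "complex^'k" where v0: "v \<noteq> 0" and eq: "(\<chi> i j. complex_of_real (a * (R$j$i - 1 / n) - (if i = j then 1 else 0))) *v v = l *s v"
    using ev unfolding is_eigenvalue_def n_def by blast
  have rows: "\<And>i. (\<Sum>j\<in>UNIV. R $ i $ j) = 1" and cols: "\<And>j. (\<Sum>i\<in>UNIV. R $ i $ j) = 1"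
    and nn: "\<And>i j. 0 \<le> R $ i $ j"
    using ds unfolding doubly_stochastic_def by auto
  define s where "s = (\<Sum>j\<in>UNIV. v $ j)"
  have comp: "a * (\<Sum>j\<in>UNIV. R$j$i * v$j) - a * s / n - v $ i = l * v $ i" for i
  proof -
    have "(\<Sum>j\<in>UNIV. complex_of_real (a * (R$j$i - 1 / n) - (if i = j then 1 else 0)) * v$j) = l * v$i"
      using eq[THEN arg_cong[where f="\<lambda>u. u $ i"]] by (simp add: matrix_vector_mult_def)
    moreover have "(\<Sum>j\<in>UNIV. complex_of_real (a * (R$j$i - 1 / n) - (if i = j then 1 else 0)) * v$j)
       = a * (\<Sum>j\<in>UNIV. R$j$i * v$j) - a * s / n - v $ i"
    proof -
      have "\<And>j. complex_of_real (a * (R$j$i - 1 / n) - (if i = j then 1 else 0)) * v$j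
          = a * (R$j$i * v$j) - a / n * v$j - (if i = j then v$j else 0)"
        by (simp add: algebra_simps)
      then have "(\<Sum>j\<in>UNIV. complex_of_real (a * (R$j$i - 1 / n) - (if i = j then 1 else 0)) * v$j)
          = (\<Sum>j\<in>UNIV. a * (R$j$i * v$j) - a / n * v$j - (if i = j then v$j else 0))"
        by (rule sum.cong[OF refl])
      also have "\<dots> = a * (\<Sum>j\<in>UNIV. R$j$i * v$j) - a / n * s - v $ i"
        by (simp add: sum_subtractf sum_distrib_left s_def)
      finally show ?thesis by simp
    qed
    ultimately show ?thesis by simp
  qed
  show ?thesis
  proof (cases "s = 0")
    case False
    have "(\<Sum>i\<in>UNIV. a * (\<Sum>j\<in>UNIV. R$j$i * v$j) - a * s / n - v $ i) = (\<Sum>i\<in>UNIV. l * v $ i)"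
      using comp by simp
    moreover have "(\<Sum>i\<in>UNIV. a * (\<Sum>j\<in>UNIV. R$j$i * v$j)) = a * s"
    proof -
      have "(\<Sum>i\<in>UNIV. (\<Sum>j\<in>UNIV. complex_of_real (R$j$i) * v$j)) = (\<Sum>j\<in>UNIV. (\<Sum>i\<in>UNIV. complex_of_real (R$j$i)) * v$j)"
        by (subst sum.swap) (simp add: sum_distrib_right)
      also have "\<dots> = s" using rows by (simp add: s_def flip: of_real_sum)
      finally show ?thesis by (simp add: sum_distrib_left[symmetric])
    qed
    moreover have "(\<Sum>i\<in>UNIV. a * (\<Sum>j\<in>UNIV. R$j$i * v$j) - a * s / n - v $ i)
        = (\<Sum>i\<in>UNIV. a * (\<Sum>j\<in>UNIV. R$j$i * v$j)) - of_nat CARD('k) * (a * s / n) - s"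
      by (simp add: sum_subtractf s_def)
    moreover have "of_nat CARD('k) * (a * s / n) = a * s"
      using n0 unfolding n_def by simp
    moreover have "(\<Sum>i\<in>UNIV. l * v $ i) = l * s" by (simp add: s_def sum_distrib_left)
    ultimately have "a * s - a * s - s = l * s"
      by simp
    then have "(l + 1) * s = 0" by (simp add: algebra_simps) (metis add.commute neg_eq_iff_add_eq_0)
    then have "l = -1" using False by (simp add: add_eq_0_iff) (metis minus_minus)
    then show ?thesis by simp
  next
    case True
    obtain i where i: "norm (v $ i) = Max (range (\<lambda>j. norm (v$j)))"
    proof -
      have "Max (range (\<lambda>j. norm (v$j))) \<in> range (\<lambda>j. norm (v$j))"
        by (rule Max_in) auto
      then show ?thesis using that by (metis imageE)
    qed
    have imax: "\<And>j. norm (v $ j) \<le> norm (v $ i)"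
      unfolding i by (rule Max_ge) auto
    have vi: "v $ i \<noteq> 0"
    proof
      assume "v $ i = 0"
      then have "\<And>j. v $ j = 0" using imax by (metis norm_le_zero_iff norm_zero)
      then show False using v0 by (simp add: vec_eq_iff)
    qed
    have "(l + 1) * v $ i = a * (\<Sum>j\<in>UNIV. R$j$i * v$j)"
      using comp[of i] True by (simp add: algebra_simps)
    then have "norm (l + 1) * norm (v $ i) = \<bar>a\<bar> * norm (\<Sum>j\<in>UNIV. R$j$i * v$j)"
      by (metis norm_mult norm_of_real)
    also have "norm (\<Sum>j\<in>UNIV. R$j$i * v$j) \<le> (\<Sum>j\<in>UNIV. R$j$i * norm (v$i))"
    proof -
      have "norm (\<Sum>j\<in>UNIV. R$j$i * v$j) \<le> (\<Sum>j\<in>UNIV. norm (complex_of_real (R$j$i) * v$j))"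
        by (rule norm_sum)
      also have "\<dots> \<le> (\<Sum>j\<in>UNIV. R$j$i * norm (v$i))"
        by (rule sum_mono) (simp add: norm_mult nn imax mult_left_mono)
      finally show ?thesis .
    qed
    also have "(\<Sum>j\<in>UNIV. R$j$i * norm (v$i)) = norm (v $ i)"
      using cols by (simp add: sum_distrib_right[symmetric])
    finally have "norm (l + 1) * norm (v $ i) \<le> \<bar>a\<bar> * norm (v $ i)"
      by (simp add: mult_left_mono)
    then have "norm (l + 1) \<le> \<bar>a\<bar>" using vi by simp
    moreover have "Re (l + 1) \<le> norm (l + 1)" by (rule complex_Re_le_cmod)
    ultimately show ?thesis using a by simp
  qed
qed

lemma axis_sum: "(\<Sum>l\<in>UNIV. (axis j (1::real) :: real^'n) $ l * f l) = f j"
  by (simp add: axis_def if_distrib[where f="\<lambda>x. x * f _"] cong: if_cong)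

lemma axis_sum1: "(\<Sum>l\<in>UNIV. (axis j (1::real) :: real^'n) $ l) = 1"
  by (simp add: axis_def)

lemma hcomp:
  "hfield w R y $ j = inverse (\<Sum>i\<in>UNIV. wext w (y$i)) * (\<Sum>i\<in>UNIV. R$i$j * wext w (y$i)) - y$j"
  by (simp add: hfield_def Let_def vector_matrix_mult_def divide_inverse mult.commute)

theorem corollary2:
  fixes w w' :: "real \<Rightarrow> real" and R :: "real^'k^'k"
  assumes pos: "\<forall>x\<in>{0..1}. w x > 0"
    and noninc: "\<forall>x\<in>{0..1}. \<forall>y\<in>{0..1}. x \<le> y \<longrightarrow> w y \<le> w x"
    and deriv: "\<forall>x\<in>{0..1}. (w has_real_derivative w' x) (at x within {0..1})"
    and ds: "doubly_stochastic R"
    and cond: "real CARD('k) > - w' (1 / real CARD('k)) / w (1 / real CARD('k))"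
  shows "stable_equilibrium (hfield w R) (\<chi> i. 1 / real CARD('k))"
proof -
  define n where "n = real CARD('k)"
  define c where "c = 1 / n"
  define x :: "real^'k" where "x = (\<chi> i. 1 / real CARD('k))"
  have n1: "n \<ge> 1" unfolding n_def by (simp add: Suc_leI)
  have c01: "0 < c" "c \<le> 1" using n1 unfolding c_def by auto
  have xc: "\<And>i. x $ i = c" unfolding x_def c_def n_def by simp
  have rows: "\<And>i. (\<Sum>j\<in>UNIV. R $ i $ j) = 1" and cols: "\<And>j. (\<Sum>i\<in>UNIV. R $ i $ j) = 1"
    and nn: "\<And>i j. 0 \<le> R $ i $ j"
    using ds unfolding doubly_stochastic_def by auto
  have wpos: "\<And>y. wext w y > 0" using pos by (simp add: wext_def)
  have wc: "wext w c = w c" using c01 by (simp add: wext_def)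
  define D where "D a = (\<lambda>v::real^'k. \<chi> j. a * ((\<Sum>i\<in>UNIV. v$i * R$i$j) - (\<Sum>i\<in>UNIV. v$i) / n) - v$j)" for a
  obtain a where a: "\<bar>a\<bar> < 1" and hd: "(hfield w R has_derivative D a) (at x)"
  proof (cases "CARD('k) = 1")
    case True
    have "hfield w R = (\<lambda>y. (\<chi> j. 1) - y)"
    proof
      fix y :: "real^'k"
      show "hfield w R y = (\<chi> j. 1) - y"
      proof (subst vec_eq_iff, intro allI)
        fix j :: 'k
        have U: "UNIV = {j}" using True by (metis card_1_singletonE singletonD UNIV_I)
        have "R$j$j = 1" using rows[of j] by (simp add: U)
        then show "hfield w R y $ j = ((\<chi> j. 1) - y) $ j"
          using wpos[of "y$j"] by (simp add: hcomp U)
      qed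
    qed
    moreover have "((\<lambda>y. (\<chi> j. 1) - y) has_derivative D 0) (at x)"
    proof -
      have "((\<lambda>y. (\<chi> j. 1) - y) has_derivative (\<lambda>v. 0 - v)) (at x)"
        by (intro derivative_intros)
      moreover have "(\<lambda>v. 0 - v) = D 0" by (auto simp: D_def vec_eq_iff)
      ultimately show ?thesis by simp
    qed
    ultimately show ?thesis using that[of 0] by simp
  next
    case False
    then have n2: "n \<ge> 2" unfolding n_def using n1 n_def by linarith
    then have c1: "c < 1" unfolding c_def by simp
    have wd: "(wext w has_real_derivative w' c) (at c)"
    proof -
      have "(w has_real_derivative w' c) (at c within {0..1})" using deriv c01 by simp
      moreover have "at c within {0..1} = at c"
        by (rule at_within_interior) (use c01 c1 in simp)
      ultimately have "(w has_real_derivative w' c) (at c)" by simp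
      then show ?thesis
        by (rule has_field_derivative_transform_within_open[where S="{0<..<1}"])
           (use c01 c1 in \<open>auto simp: wext_def\<close>)
    qed
    have w'le: "w' c \<le> 0"
    proof (rule ccontr)
      assume "\<not> w' c \<le> 0"
      then obtain d where d: "d > 0" "\<And>h. 0 < h \<Longrightarrow> h < d \<Longrightarrow> wext w c < wext w (c + h)"
        using DERIV_pos_inc_right[OF wd] by force
      define h where "h = min (d/2) ((1 - c)/2)"
      have h1: "h \<le> (1 - c)/2" "h \<le> d/2" unfolding h_def by (rule min.cobounded2, rule min.cobounded1)
      have h: "0 < h" "h < d" "c + h \<le> 1" using d(1) c1 h1 unfolding h_def by auto
      have "wext w (c + h) \<le> wext w c"
        using noninc c01 h by (simp add: wext_def)
      with d(2)[OF h(1,2)] show False by simp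
    qed
    define a where "a = w' c / (n * w c)"
    have wcpos: "w c > 0" using pos c01 by simp
    have "- w' c / w c < n" using cond unfolding n_def c_def by simp
    then have "(- w' c) / w c < n" by (simp only: minus_divide_left)
    then have "- w' c < n * w c" using pos_divide_less_eq[OF wcpos] by (simp only:)
    moreover have nw: "n * w c > 0" using wcpos n1 by simp
    ultimately have "-1 < a" unfolding a_def using pos_less_divide_eq[OF nw, of "-1" "w' c"] by simp
    moreover have "a \<le> 0" unfolding a_def using w'le nw by (simp add: divide_nonpos_pos)
    ultimately have aa: "\<bar>a\<bar> < 1" by simp
    have "(hfield w R has_derivative D a) (at x)"
    proof (rule vec_deriv_comp)
      fix j
      have di: "((\<lambda>y. wext w (y$i)) has_derivative (\<lambda>v. w' c * v$i)) (at x)" for i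
      proof -
        have "((\<lambda>y. y$i) has_derivative (\<lambda>v. v$i)) (at x)"
          by (rule bounded_linear_imp_has_derivative) (rule bounded_linear_vec_nth)
        from has_derivative_compose[OF this wd[unfolded has_field_derivative_def, folded xc[of i]]]
        show ?thesis by (simp add: mult.commute xc)
      qed
      have dS: "((\<lambda>y. \<Sum>i\<in>UNIV. wext w (y$i)) has_derivative (\<lambda>v. \<Sum>i\<in>UNIV. w' c * v$i)) (at x)"
        by (intro has_derivative_sum di)
      have dN: "((\<lambda>y. \<Sum>i\<in>UNIV. R$i$j * wext w (y$i)) has_derivative (\<lambda>v. \<Sum>i\<in>UNIV. R$i$j * (w' c * v$i))) (at x)"
        by (intro has_derivative_sum has_derivative_mult_right di)
      have Sx: "(\<Sum>i\<in>UNIV. wext w (x$i)) = n * w c" by (simp add: xc wc n_def)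
      have Nx: "(\<Sum>i\<in>UNIV. R$i$j * wext w (x$i)) = w c" by (simp add: xc wc cols flip: sum_distrib_right)
      have dI: "((\<lambda>y. inverse (\<Sum>i\<in>UNIV. wext w (y$i))) has_derivative
          (\<lambda>v. - (inverse (n * w c) * (\<Sum>i\<in>UNIV. w' c * v$i) * inverse (n * w c)))) (at x)"
        using Deriv.has_derivative_inverse[OF _ dS] Sx wcpos n1 by simp
      have dyj: "((\<lambda>y. y$j) has_derivative (\<lambda>v. v$j)) (at x)"
        by (rule bounded_linear_imp_has_derivative) (rule bounded_linear_vec_nth)
      have dj: "((\<lambda>y. (\<lambda>y. hfield w R y $ j) y) has_derivative
          (\<lambda>v. inverse (n * w c) * (\<Sum>i\<in>UNIV. R$i$j * (w' c * v$i))
               + (- (inverse (n * w c) * (\<Sum>i\<in>UNIV. w' c * v$i) * inverse (n * w c))) * w c - v$j)) (at x)"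
        unfolding hcomp
        using has_derivative_diff[OF has_derivative_mult[OF dI dN] dyj]
        using Sx Nx by simp
      show "((\<lambda>y. hfield w R y $ j) has_derivative (\<lambda>v. D a v $ j)) (at x)"
      proof (rule has_derivative_eq_rhs[OF dj], rule ext)
        fix v :: "real^'k"
        show "inverse (n * w c) * (\<Sum>i\<in>UNIV. R$i$j * (w' c * v$i))
               + (- (inverse (n * w c) * (\<Sum>i\<in>UNIV. w' c * v$i) * inverse (n * w c))) * w c - v$j = D a v $ j"
          using wcpos n1 unfolding D_def a_def
          by (simp add: field_simps sum_distrib_left sum_divide_distrib mult.commute mult.left_commute)
      qed
    qed
    then show ?thesis using that aa by blast
  qed
  have hx: "hfield w R x = 0"
  proof (subst vec_eq_iff, intro allI)
    fix j
    show "hfield w R x $ j = 0 $ j"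
      using wpos[of c] n1 by (simp add: hcomp xc cols n_def c_def field_simps flip: sum_distrib_right)
  qed
  have jac: "jacobian (hfield w R) x = (\<chi> i j. a * (R$j$i - 1 / real CARD('k)) - (if i = j then 1 else 0))"
  proof -
    have "jacobian (hfield w R) x = matrix (D a)"
      unfolding jacobian_def using frechet_derivative_at[OF hd] by simp
    also have "\<dots> = (\<chi> i j. a * (R$j$i - 1 / real CARD('k)) - (if i = j then 1 else 0))"
      unfolding matrix_def D_def n_def
      by (simp add: vec_eq_iff axis_sum axis_sum1) (simp add: axis_def)
    finally show ?thesis .
  qed
  show ?thesis
    unfolding stable_equilibrium_def x_def[symmetric]
  proof (intro conjI allI impI)
    show "hfield w R x = 0" by (rule hx)
    show "hfield w R differentiable at x" using hd by (rule differentiableI)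
    fix l assume "is_eigenvalue (\<chi> i j. complex_of_real (jacobian (hfield w R) x $ i $ j)) l"
    then show "Re l < 0" using eig_lemma[OF ds a] unfolding jac by simp
  qed
qed
end
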